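(* Let $\varepsilon\in\{-1,1\}$, $\nu>0$ and let $l$ be a non-negative integer. Then there is $C>0$ such that $$\|\partial_x^l K(\cdot,\cdot,t)\|_{L^\infty(\mathbb{R}^2)}\le C t^{-\frac54-\frac l2},\qquad t>0 .$$
   Context: $K(x,y,t):=t^{-5/4}K_*(xt^{-1/2},yt^{-3/4})$ for $(x,y)\in\mathbb{R}^2$, $t>0$, where $$K_*(x,y):=\frac{1}{4\pi^{3/2}\nu^{3/4}}\int_0^\infty r^{-1/4}e^{-r}\cos\Big(x\sqrt{\tfrac{r}{\nu}}+\frac{y^2}{4\varepsilon}\sqrt{\tfrac{r}{\nu}}-\frac{\pi}{4}\varepsilon\Big)\,dr .$$ *)

theory Defs
  imports "HOL-Analysis.Analysis"
begin

definition Kstar :: "real \<Rightarrow> real \<Rightarrow> real \<Rightarrow> real \<Rightarrow> real" where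
  "Kstar eps nu x y =
     1 / (4 * pi powr (3/2) * nu powr (3/4)) *
     (LINT r:{0<..}|lborel.
        r powr (-1/4) * exp (- r) *
        cos (x * sqrt (r / nu) + y\<^sup>2 / (4 * eps) * sqrt (r / nu) - pi / 4 * eps))"

definition Kker :: "real \<Rightarrow> real \<Rightarrow> real \<Rightarrow> real \<Rightarrow> real \<Rightarrow> real" where
  "Kker eps nu x y t = t powr (-5/4) * Kstar eps nu (x * t powr (-1/2)) (y * t powr (-3/4))"

end

theory Submission
  imports Defs
begin

lemma DERIV_integral_param:
  fixes f f' :: "real \<Rightarrow> 'a \<Rightarrow> real"
  assumes int: "\<And>z. integrable M (f z)"
   and meas': "\<And>z. f' z \<in> borel_measurable M"
   and g: "integrable M g"
   and der: "\<And>z x. x \<in> space M \<Longrightarrow> ((\<lambda>z. f z x) has_real_derivative f' z x) (at z)"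
   and bnd: "\<And>z x. x \<in> space M \<Longrightarrow> \<bar>f' z x\<bar> \<le> g x"
  shows "((\<lambda>z. integral\<^sup>L M (f z)) has_real_derivative integral\<^sup>L M (f' z0)) (at z0)"
proof -
  have "((\<lambda>h. (integral\<^sup>L M (f (z0+h)) - integral\<^sup>L M (f z0)) / h) \<longlongrightarrow> integral\<^sup>L M (f' z0)) (at 0)"
  proof (subst tendsto_at_iff_sequentially, intro allI impI)
    fix X :: "nat \<Rightarrow> real" assume X: "\<forall>i. X i \<in> UNIV - {0}" "X \<longlonglongrightarrow> 0"
    have eq: "(\<lambda>h. (integral\<^sup>L M (f (z0+h)) - integral\<^sup>L M (f z0)) / h) \<circ> X
       = (\<lambda>i. integral\<^sup>L M (\<lambda>x. (f (z0 + X i) x - f z0 x) / X i))"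
      by (simp add: o_def int)
    show "((\<lambda>h. (integral\<^sup>L M (f (z0+h)) - integral\<^sup>L M (f z0)) / h) \<circ> X) \<longlonglongrightarrow> integral\<^sup>L M (f' z0)"
      unfolding eq
    proof (rule integral_dominated_convergence[where w=g])
      show "f' z0 \<in> borel_measurable M" by (rule meas')
      show "(\<lambda>x. (f (z0 + X i) x - f z0 x) / X i) \<in> borel_measurable M" for i
        by (intro borel_measurable_divide borel_measurable_diff borel_measurable_integrable[OF int] borel_measurable_const)
      show "integrable M g" by (rule g)
      show "AE x in M. (\<lambda>i. (f (z0 + X i) x - f z0 x) / X i) \<longlonglongrightarrow> f' z0 x"
      proof (rule AE_I2)
        fix x assume x: "x \<in> space M"
        have "((\<lambda>h. (f (z0+h) x - f z0 x) / h) \<longlongrightarrow> f' z0 x) (at 0)"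
          using der[OF x, of z0] by (simp add: DERIV_def)
        then have "((\<lambda>h. (f (z0+h) x - f z0 x) / h) \<circ> X) \<longlonglongrightarrow> f' z0 x"
          using X by (subst (asm) tendsto_at_iff_sequentially) blast
        then show "(\<lambda>i. (f (z0 + X i) x - f z0 x) / X i) \<longlonglongrightarrow> f' z0 x" by (simp add: o_def)
      qed
      show "AE x in M. norm ((f (z0 + X i) x - f z0 x) / X i) \<le> g x" for i
      proof (rule AE_I2)
        fix x assume x: "x \<in> space M"
        have "norm (f (z0 + X i) x - f z0 x) \<le> g x * norm ((z0 + X i) - z0)"
          by (rule field_differentiable_bound[where S=UNIV and f="\<lambda>z. f z x" and f'="\<lambda>z. f' z x"])
             (use der[OF x] bnd[OF x] in auto)
        moreover have "X i \<noteq> 0" using X by auto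
        ultimately show "norm ((f (z0 + X i) x - f z0 x) / X i) \<le> g x"
          by (simp add: divide_le_eq)
      qed
    qed
  qed
  then show ?thesis by (simp add: DERIV_def)
qed


definition hk :: "real \<Rightarrow> real \<Rightarrow> nat \<Rightarrow> real \<Rightarrow> real \<Rightarrow> real" where
  "hk nu phi k z r = r powr (-1/4) * exp (-r) * sqrt (r/nu) ^ k * cos (z * sqrt (r/nu) + phi + real k * pi / 2)"

definition gk :: "real \<Rightarrow> nat \<Rightarrow> real \<Rightarrow> real" where
  "gk nu k r = r powr (-1/4) * exp (-r) * sqrt (r/nu) ^ k"

definition HH :: "real \<Rightarrow> real \<Rightarrow> nat \<Rightarrow> real \<Rightarrow> real" where
  "HH nu phi k z = (LINT r:{0<..}|lborel. hk nu phi k z r)"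

lemma gk_integrable:
  assumes nu: "nu > 0"
  shows "set_integrable lborel {0<..} (gk nu k)"
proof -
  define s where "s = real k / 2 + 3/4"
  have s: "s > 0" unfolding s_def by simp
  have i1: "integrable lborel (\<lambda>t. indicator {0..} t * t powr (s - 1) / exp t)"
  proof (rule integrableI_nonneg)
    show "(\<lambda>t. indicator {0..} t * t powr (s - 1) / exp t) \<in> borel_measurable lborel"
      by measurable
    show "AE x in lborel. 0 \<le> indicator {0..} x * x powr (s - 1) / exp x"
      by (rule AE_I2) (auto simp: indicator_def)
    show "(\<integral>\<^sup>+ x. ennreal (indicator {0..} x * x powr (s - 1) / exp x) \<partial>lborel) < \<infinity>"
      using Gamma_conv_nn_integral_real[OF s] by (metis ennreal_less_top infinity_ennreal_def)
  qed
  have eq: "indicator {0<..} r *\<^sub>R gk nu k r = nu powr (- real k / 2) * (indicator {0..} r * r powr (s - 1) / exp r)" for r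
  proof (cases "r > 0")
    case True
    have "sqrt (r/nu) ^ k = (r/nu) powr (real k / 2)"
      using True nu by (simp add: powr_half_sqrt[symmetric] powr_power)
    also have "\<dots> = r powr (real k / 2) * nu powr (- real k / 2)"
      using True nu by (subst powr_divide) (auto simp: powr_minus_divide)
    finally have 1: "sqrt (r/nu) ^ k = r powr (real k / 2) * nu powr (- real k / 2)" .
    have 2: "r powr (-1/4) * r powr (real k / 2) = r powr (s - 1)"
      using True by (simp add: powr_add[symmetric] s_def)
    show ?thesis using True
      by (simp add: gk_def 1 exp_minus field_simps 2[symmetric])
  next
    case False
    then show ?thesis by (cases "r = 0") (auto simp: indicator_def)
  qed
  show ?thesis
    unfolding set_integrable_def eq by (intro integrable_mult_right i1)
qed

lemma hk_meas: "(\<lambda>r. indicator {0<..} r *\<^sub>R hk nu phi k z r) \<in> borel_measurable lborel"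
  unfolding hk_def by measurable

lemma hk_bound:
  assumes nu: "nu > 0"
  shows "\<bar>indicator {0<..} r *\<^sub>R hk nu phi k z r\<bar> \<le> indicator {0<..} r *\<^sub>R gk nu k r"
proof -
  have "\<bar>hk nu phi k z r\<bar> \<le> \<bar>gk nu k r\<bar>"
    unfolding hk_def gk_def abs_mult by (intro mult_left_le) auto
  moreover have "r > 0 \<Longrightarrow> gk nu k r \<ge> 0" unfolding gk_def
    by (intro mult_nonneg_nonneg zero_le_power) (use nu in auto)
  ultimately show ?thesis by (auto simp: indicator_def)
qed

lemma hk_integrable:
  assumes nu: "nu > 0"
  shows "integrable lborel (\<lambda>r. indicator {0<..} r *\<^sub>R hk nu phi k z r)"
proof (rule Bochner_Integration.integrable_bound)
  show "integrable lborel (\<lambda>r. indicator {0<..} r *\<^sub>R gk nu k r)"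
    using gk_integrable[OF nu, of k] unfolding set_integrable_def .
  show "(\<lambda>r. indicator {0<..} r *\<^sub>R hk nu phi k z r) \<in> borel_measurable lborel"
    by (rule hk_meas)
  show "AE x in lborel. norm (indicator {0<..} x *\<^sub>R hk nu phi k z x) \<le> norm (indicator {0<..} x *\<^sub>R gk nu k x)"
  proof (rule AE_I2)
    fix x
    show "norm (indicator {0<..} x *\<^sub>R hk nu phi k z x) \<le> norm (indicator {0<..} x *\<^sub>R gk nu k x)"
      using hk_bound[OF nu, of x phi k z] unfolding real_norm_def by linarith
  qed
qed

lemma hk_deriv:
  "((\<lambda>z. hk nu phi k z r) has_real_derivative hk nu phi (Suc k) z r) (at z)"
proof -
  have "((\<lambda>z. hk nu phi k z r) has_real_derivative
      r powr (-1/4) * exp (-r) * sqrt (r/nu) ^ k * (- sin (z * sqrt (r/nu) + phi + real k * pi / 2) * sqrt (r/nu))) (at z)"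
    unfolding hk_def by (auto intro!: derivative_eq_intros)
  also have "r powr (-1/4) * exp (-r) * sqrt (r/nu) ^ k * (- sin (z * sqrt (r/nu) + phi + real k * pi / 2) * sqrt (r/nu))
      = hk nu phi (Suc k) z r"
    unfolding hk_def minus_sin_cos_eq by (simp add: algebra_simps add_divide_distrib)
  finally show ?thesis .
qed

lemma HH_deriv:
  assumes nu: "nu > 0"
  shows "(HH nu phi k has_real_derivative HH nu phi (Suc k) z) (at z)"
proof -
  have "((\<lambda>z. integral\<^sup>L lborel (\<lambda>r. indicator {0<..} r *\<^sub>R hk nu phi k z r)) has_real_derivative
     integral\<^sup>L lborel (\<lambda>r. indicator {0<..} r *\<^sub>R hk nu phi (Suc k) z r)) (at z)"
  proof (rule DERIV_integral_param[where g="\<lambda>r. indicator {0<..} r *\<^sub>R gk nu (Suc k) r"])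
    show "integrable lborel (\<lambda>r. indicator {0<..} r *\<^sub>R hk nu phi k z r)" for z
      by (rule hk_integrable[OF nu])
    show "(\<lambda>r. indicator {0<..} r *\<^sub>R hk nu phi (Suc k) z r) \<in> borel_measurable lborel" for z
      by (rule hk_meas)
    show "integrable lborel (\<lambda>r. indicator {0<..} r *\<^sub>R gk nu (Suc k) r)"
      using gk_integrable[OF nu] unfolding set_integrable_def .
    show "((\<lambda>z. indicator {0<..} r *\<^sub>R hk nu phi k z r) has_real_derivative
          indicator {0<..} r *\<^sub>R hk nu phi (Suc k) z r) (at z)" for z r
      unfolding real_scaleR_def by (intro DERIV_cmult hk_deriv)
    show "\<bar>indicator {0<..} r *\<^sub>R hk nu phi (Suc k) z r\<bar> \<le> indicator {0<..} r *\<^sub>R gk nu (Suc k) r" for z r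
      by (rule hk_bound[OF nu])
  qed
  then show ?thesis unfolding HH_def set_lebesgue_integral_def by simp
qed

lemma HH_bound:
  assumes nu: "nu > 0"
  shows "\<bar>HH nu phi k z\<bar> \<le> (LINT r:{0<..}|lborel. gk nu k r)"
proof -
  have "norm (integral\<^sup>L lborel (\<lambda>r. indicator {0<..} r *\<^sub>R hk nu phi k z r))
     \<le> integral\<^sup>L lborel (\<lambda>r. indicator {0<..} r *\<^sub>R gk nu k r)"
    by (rule Bochner_Integration.integral_norm_bound_integral[OF hk_integrable[OF nu]
          gk_integrable[OF nu, unfolded set_integrable_def]])
       (use hk_bound[OF nu] in \<open>simp only: real_norm_def\<close>)
  then show ?thesis unfolding HH_def set_lebesgue_integral_def real_norm_def .
qed

lemma Kstar_HH:
  "Kstar eps nu x y = 1 / (4 * pi powr (3/2) * nu powr (3/4)) * HH nu (-(pi / 4 * eps)) 0 (x + y\<^sup>2 / (4 * eps))"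
proof -
  have "(\<lambda>r. r powr (-1/4) * exp (- r) *
        cos (x * sqrt (r / nu) + y\<^sup>2 / (4 * eps) * sqrt (r / nu) - pi / 4 * eps))
      = hk nu (-(pi / 4 * eps)) 0 (x + y\<^sup>2 / (4 * eps))"
    unfolding hk_def by (rule ext) (simp add: algebra_simps)
  then show ?thesis unfolding Kstar_def HH_def by simp
qed

lemma iter_deriv:
  assumes nu: "nu > 0"
  shows "(deriv ^^ l) (\<lambda>x. A * HH nu phi 0 (x * s + w)) = (\<lambda>x. A * s ^ l * HH nu phi l (x * s + w))"
proof (induction l)
  case 0
  then show ?case by simp
next
  case (Suc l)
  have "(deriv ^^ Suc l) (\<lambda>x. A * HH nu phi 0 (x * s + w)) = deriv ((deriv ^^ l) (\<lambda>x. A * HH nu phi 0 (x * s + w)))"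
    by simp
  also have "\<dots> = deriv (\<lambda>x. A * s ^ l * HH nu phi l (x * s + w))" by (simp only: Suc)
  also have "\<dots> = (\<lambda>x. A * s ^ Suc l * HH nu phi (Suc l) (x * s + w))"
  proof (rule ext, rule DERIV_imp_deriv)
    fix x
    have "((\<lambda>x. HH nu phi l (x * s + w)) has_real_derivative HH nu phi (Suc l) (x * s + w) * s) (at x)"
      by (rule DERIV_chain2[OF HH_deriv[OF nu]]) (auto intro!: derivative_eq_intros)
    then have "((\<lambda>x. A * s ^ l * HH nu phi l (x * s + w)) has_real_derivative A * s ^ l * (HH nu phi (Suc l) (x * s + w) * s)) (at x)"
      by (rule DERIV_cmult)
    then show "((\<lambda>x. A * s ^ l * HH nu phi l (x * s + w)) has_real_derivative A * s ^ Suc l * HH nu phi (Suc l) (x * s + w)) (at x)"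
      by (simp add: algebra_simps)
  qed
  finally show ?case .
qed

theorem proposition2p3:
  fixes eps nu :: real and l :: nat
  assumes "eps \<in> {-1, 1}" and "nu > 0"
  shows "\<exists>C>0. \<forall>t>0. \<forall>x y.
           \<bar>(deriv ^^ l) (\<lambda>x'. Kker eps nu x' y t) x\<bar> \<le> C * t powr (-5/4 - real l / 2)"
proof -
  define c where "c = 1 / (4 * pi powr (3/2) * nu powr (3/4))"
  define phi where "phi = -(pi / 4 * eps)"
  define B where "B = (LINT r:{0<..}|lborel. gk nu l r)"
  have B0: "B \<ge> 0" using HH_bound[OF assms(2), of phi l 0] unfolding B_def by linarith
  define C where "C = \<bar>c\<bar> * B + 1"
  have Cpos: "C > 0" unfolding C_def using B0 by (simp add: add_nonneg_pos)
  have main: "\<bar>(deriv ^^ l) (\<lambda>x'. Kker eps nu x' y t) x\<bar> \<le> C * t powr (-5/4 - real l / 2)"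
    if t: "t > 0" for t x y
  proof -
    define s where "s = t powr (-1/2)"
    define w where "w = (y * t powr (-3/4))\<^sup>2 / (4 * eps)"
    have eqK: "(\<lambda>x'. Kker eps nu x' y t) = (\<lambda>x'. (t powr (-5/4) * c) * HH nu phi 0 (x' * s + w))"
      unfolding Kker_def Kstar_HH c_def phi_def s_def w_def by (simp add: mult.assoc)
    have "(deriv ^^ l) (\<lambda>x'. Kker eps nu x' y t) x = t powr (-5/4) * c * s ^ l * HH nu phi l (x * s + w)"
      unfolding eqK iter_deriv[OF assms(2)] by simp
    also have "\<dots> = c * t powr (-5/4 - real l / 2) * HH nu phi l (x * s + w)"
    proof -
      have "s ^ l = t powr (real l * (-1/2))" unfolding s_def using t by (simp add: powr_power)
      then have "t powr (-5/4) * s ^ l = t powr (-5/4 - real l / 2)"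
        using t by (simp add: powr_add[symmetric])
      then show ?thesis by (simp add: algebra_simps)
    qed
    finally have eq: "(deriv ^^ l) (\<lambda>x'. Kker eps nu x' y t) x = c * t powr (-5/4 - real l / 2) * HH nu phi l (x * s + w)" .
    have "\<bar>c * t powr (-5/4 - real l / 2) * HH nu phi l (x * s + w)\<bar>
        = \<bar>c\<bar> * t powr (-5/4 - real l / 2) * \<bar>HH nu phi l (x * s + w)\<bar>"
      by (simp add: abs_mult)
    also have "\<dots> \<le> \<bar>c\<bar> * t powr (-5/4 - real l / 2) * B"
      unfolding B_def by (intro mult_left_mono HH_bound[OF assms(2)]) auto
    also have "\<dots> \<le> C * t powr (-5/4 - real l / 2)"
      unfolding C_def by (simp add: algebra_simps)
    finally show ?thesis unfolding eq .
  qed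
  show ?thesis using Cpos main by blast
qed

end
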